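(* Assume (A1) and let $i,j\in I_N$. Each of the functions $\mathcal{D}_{\mathrm{junction}}^{ji}$, $\mathcal{D}_{\mathrm{linear}}^{ji}$, $\mathcal{D}_{\mathrm{implicit}}^{ji}$ is convex and $C^1$ on $J_j^*\times J_i^*$ (as a function of $(y_j,x_i)\in(0,\infty)^2$), and if $\tilde{\mathcal{D}}$ denotes any one of them, then for all $(y,x)\in J_j^*\times J_i^*$, $$\tilde{\mathcal{D}}-x_i\partial_{x_i}\tilde{\mathcal{D}}-y_j\partial_{y_j}\tilde{\mathcal{D}}+H_i(\partial_{x_i}\tilde{\mathcal{D}})=0,\qquad \tilde{\mathcal{D}}-x_i\partial_{x_i}\tilde{\mathcal{D}}-y_j\partial_{y_j}\tilde{\mathcal{D}}+H_j(-\partial_{y_j}\tilde{\mathcal{D}})=0,$$ all quantities evaluated at $(y,x)$.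
   Context: Junction: fix an integer $N\ge1$ and $N$ distinct unit vectors $e_1,\dots,e_N\in\mathbb{R}^2$. Set $J_i=[0,\infty)e_i$, $J_i^*=J_i\setminus\{0\}$, $J=\bigcup_iJ_i$, $I_N=\{1,\dots,N\}$. Each $x\in J_i$ is written $x=x_ie_i$, $x_i\ge0$. For a function $f$ on $J\times J$ (variables $(y,x)$), $f^{ji}$ denotes its restriction to $J_j\times J_i$, viewed as a function of $(y_j,x_i)$. (A1): there is $\gamma>0$ with $L_i\in C^2(\mathbb{R})$, $L_i''\ge\gamma$ for each $i$; $H_i(p)=\sup_{q\in\mathbb{R}}(pq-L_i(q))$. $L_0(0)=\min_jL_j(0)$, $I_0=\{l:L_l(0)=L_0(0)\}$. $K_l(\xi)=L_l(\xi)-\xi L_l'(\xi)-L_0(0)$; $\xi_l^-\le0$ (resp. $\xi_l^+\ge0$) is the unique zero of $K_l$ on $(-\infty,0]$ (resp. $[0,\infty)$). For $\tau\in[0,1]$: $\mathcal{E}_1(\tau,y)=\tau L_j(-y_j/\tau)-\tau L_0(0)$ if $y=y_je_j\ne0$, $\tau\ne0$; $\mathcal{E}_1(\tau,0)=0$; $\mathcal{E}_1(0,y)=+\infty$ if $y\ne0$. $\mathcal{E}_2(\tau,x)=(1-\tau)L_i(x_i/(1-\tau))+\tau L_0(0)$ if $x=x_ie_i\ne0$, $\tau\ne1$; $\mathcal{E}_2(\tau,0)=L_0(0)$; $\mathcal{E}_2(1,x)=+\infty$ if $x\ne0$. $\mathcal{D}_{\mathrm{junction}}(y,x)=\inf_{0\le\tau_1\le\tau_2\le1}\{\mathcal{E}_1(\tau_1,y)+\mathcal{E}_2(\tau_2,x)\}$;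 $\mathcal{D}_{\mathrm{implicit}}(y,x)=\inf_{0\le\tau\le1}\{\mathcal{E}_1(\tau,y)+\mathcal{E}_2(\tau,x)\}$; for $(y,x)\in J_j\times J_i$, $\mathcal{D}_{\mathrm{linear}}^{ji}(y,x)=-L_j'(\xi_j^-)y_j+L_i'(\xi_i^+)x_i+L_0(0)$. *)

theory Defs
  imports "HOL-Analysis.Analysis"
begin

text \<open>Branches are indexed by 1..N; L l is the Lagrangian on branch l.
  A point of J_j is identified with its coordinate y_j >= 0 (the restriction
  f^{ji} of a function on J x J is a function of (y_j, x_i)).\<close>

definition L00 :: "nat \<Rightarrow> (nat \<Rightarrow> real \<Rightarrow> real) \<Rightarrow> real" where
  "L00 N L = Min ((\<lambda>j. L j 0) ` {1..N})"

definition Ham :: "(nat \<Rightarrow> real \<Rightarrow> real) \<Rightarrow> nat \<Rightarrow> real \<Rightarrow> real" where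
  "Ham L l p = (SUP q. p * q - L l q)"

definition Kfun :: "nat \<Rightarrow> (nat \<Rightarrow> real \<Rightarrow> real) \<Rightarrow> nat \<Rightarrow> real \<Rightarrow> real" where
  "Kfun N L l \<xi> = L l \<xi> - \<xi> * deriv (L l) \<xi> - L00 N L"

definition xi_minus :: "nat \<Rightarrow> (nat \<Rightarrow> real \<Rightarrow> real) \<Rightarrow> nat \<Rightarrow> real" where
  "xi_minus N L l = (THE \<xi>. \<xi> \<le> 0 \<and> Kfun N L l \<xi> = 0)"

definition xi_plus :: "nat \<Rightarrow> (nat \<Rightarrow> real \<Rightarrow> real) \<Rightarrow> nat \<Rightarrow> real" where
  "xi_plus N L l = (THE \<xi>. \<xi> \<ge> 0 \<and> Kfun N L l \<xi> = 0)"

text \<open>E_1(tau, y) for y = s e_j (s = y_j >= 0).\<close>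
definition E1 :: "nat \<Rightarrow> (nat \<Rightarrow> real \<Rightarrow> real) \<Rightarrow> nat \<Rightarrow> real \<Rightarrow> real \<Rightarrow> ereal" where
  "E1 N L j \<tau> s =
     (if s = 0 then 0
      else if \<tau> = 0 then \<infinity>
      else ereal (\<tau> * L j (- s / \<tau>) - \<tau> * L00 N L))"

text \<open>E_2(tau, x) for x = s e_i (s = x_i >= 0).\<close>
definition E2 :: "nat \<Rightarrow> (nat \<Rightarrow> real \<Rightarrow> real) \<Rightarrow> nat \<Rightarrow> real \<Rightarrow> real \<Rightarrow> ereal" where
  "E2 N L i \<tau> s =
     (if s = 0 then ereal (L00 N L)
      else if \<tau> = 1 then \<infinity>
      else ereal ((1 - \<tau>) * L i (s / (1 - \<tau>)) + \<tau> * L00 N L))"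

definition D_junction :: "nat \<Rightarrow> (nat \<Rightarrow> real \<Rightarrow> real) \<Rightarrow> nat \<Rightarrow> nat \<Rightarrow> real \<times> real \<Rightarrow> ereal" where
  "D_junction N L j i z =
     (INF t \<in> {(t1, t2). 0 \<le> t1 \<and> t1 \<le> t2 \<and> t2 \<le> 1}.
        E1 N L j (fst t) (fst z) + E2 N L i (snd t) (snd z))"

definition D_implicit :: "nat \<Rightarrow> (nat \<Rightarrow> real \<Rightarrow> real) \<Rightarrow> nat \<Rightarrow> nat \<Rightarrow> real \<times> real \<Rightarrow> ereal" where
  "D_implicit N L j i z =
     (INF \<tau> \<in> {0..1}. E1 N L j \<tau> (fst z) + E2 N L i \<tau> (snd z))"

definition D_linear :: "nat \<Rightarrow> (nat \<Rightarrow> real \<Rightarrow> real) \<Rightarrow> nat \<Rightarrow> nat \<Rightarrow> real \<times> real \<Rightarrow> real" where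
  "D_linear N L j i z =
     - deriv (L j) (xi_minus N L j) * fst z + deriv (L i) (xi_plus N L i) * snd z + L00 N L"

definition Quad :: "(real \<times> real) set" where
  "Quad = {0<..} \<times> {0<..}"

definition C1_HJ :: "(real \<Rightarrow> real) \<Rightarrow> (real \<Rightarrow> real) \<Rightarrow> (real \<times> real \<Rightarrow> real) \<Rightarrow> bool" where
  "C1_HJ Hj Hi f \<longleftrightarrow>
     convex_on Quad f \<and>
     (\<exists>Dy Dx. continuous_on Quad Dy \<and> continuous_on Quad Dx \<and>
        (\<forall>z\<in>Quad.
           (f has_derivative (\<lambda>(h, k). Dy z * h + Dx z * k)) (at z) \<and>
           f z - snd z * Dx z - fst z * Dy z + Hi (Dx z) = 0 \<and>
           f z - snd z * Dx z - fst z * Dy z + Hj (- Dy z) = 0))"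

end

theory Submission
  imports Defs
begin


lemma subgrad_deriv:
  fixes f :: "real \<times> real \<Rightarrow> real" and g1 g2 :: "real \<times> real \<Rightarrow> real"
  assumes S: "open S" "z \<in> S" and c1: "continuous_on S g1" and c2: "continuous_on S g2"
    and sub: "\<And>u v. u \<in> S \<Longrightarrow> v \<in> S \<Longrightarrow>
        f v \<ge> f u + g1 u * (fst v - fst u) + g2 u * (snd v - snd u)"
  shows "(f has_derivative (\<lambda>(h, k). g1 z * h + g2 z * k)) (at z)"
proof -
  let ?D = "(\<lambda>(h, k). g1 z * h + g2 z * k)"
  have bl: "bounded_linear ?D"
  proof -
    have "?D = (\<lambda>p. g1 z * fst p + g2 z * snd p)" by auto
    moreover have "bounded_linear (\<lambda>p::real\<times>real. g1 z * fst p + g2 z * snd p)"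
      by (intro bounded_linear_add bounded_linear_const_mult bounded_linear_fst bounded_linear_snd)
    ultimately show ?thesis by simp
  qed
  have i1: "isCont g1 z" using c1 S continuous_on_eq_continuous_at by blast
  have i2: "isCont g2 z" using c2 S continuous_on_eq_continuous_at by blast
  have lim: "((\<lambda>w. \<bar>g1 w - g1 z\<bar> + \<bar>g2 w - g2 z\<bar>) \<longlongrightarrow> 0) (at z)"
  proof -
    have "((\<lambda>w. \<bar>g1 w - g1 z\<bar> + \<bar>g2 w - g2 z\<bar>) \<longlongrightarrow> \<bar>g1 z - g1 z\<bar> + \<bar>g2 z - g2 z\<bar>) (at z)"
      using i1 i2 unfolding isCont_def by (intro tendsto_intros) auto
    then show ?thesis by simp
  qed
  have ev: "eventually (\<lambda>w. norm (norm ((f w - f z) - ?D (w - z)) / norm (w - z))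
       \<le> \<bar>g1 w - g1 z\<bar> + \<bar>g2 w - g2 z\<bar>) (at z)"
    using eventually_at_in_open[OF S]
  proof (rule eventually_mono)
    fix w assume w: "w \<in> S - {z}"
    obtain a b where wab: "w = (a, b)" by (cases w)
    obtain c d where zcd: "z = (c, d)" by (cases z)
    have nz: "norm (w - z) > 0" using w by auto
    have lo: "f w \<ge> f z + g1 z * (a - c) + g2 z * (b - d)" using sub[of z w] w S wab zcd by auto
    have hi: "f z \<ge> f w + g1 w * (c - a) + g2 w * (d - b)" using sub[of w z] w S wab zcd by auto
    have Dv: "?D (w - z) = g1 z * (a - c) + g2 z * (b - d)" using wab zcd by simp
    have n1: "\<bar>a - c\<bar> \<le> norm (w - z)" using norm_fst_le[of "a - c" "b - d"] wab zcd by simp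
    have n2: "\<bar>b - d\<bar> \<le> norm (w - z)" using norm_snd_le[of "b - d" "a - c"] wab zcd by simp
    have e0: "0 \<le> f w - f z - ?D (w - z)" using lo Dv by simp
    have e1: "f w - f z - ?D (w - z) \<le> (g1 w - g1 z) * (a - c) + (g2 w - g2 z) * (b - d)"
      using hi Dv by (simp add: algebra_simps)
    have e2: "(g1 w - g1 z) * (a - c) \<le> \<bar>g1 w - g1 z\<bar> * norm (w - z)"
    proof -
      have "(g1 w - g1 z) * (a - c) \<le> \<bar>g1 w - g1 z\<bar> * \<bar>a - c\<bar>" by (metis abs_ge_self abs_mult)
      also have "\<dots> \<le> \<bar>g1 w - g1 z\<bar> * norm (w - z)" by (rule mult_left_mono[OF n1]) simp
      finally show ?thesis .
    qed
    have e3: "(g2 w - g2 z) * (b - d) \<le> \<bar>g2 w - g2 z\<bar> * norm (w - z)"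
    proof -
      have "(g2 w - g2 z) * (b - d) \<le> \<bar>g2 w - g2 z\<bar> * \<bar>b - d\<bar>" by (metis abs_ge_self abs_mult)
      also have "\<dots> \<le> \<bar>g2 w - g2 z\<bar> * norm (w - z)" by (rule mult_left_mono[OF n2]) simp
      finally show ?thesis .
    qed
    have "norm ((f w - f z) - ?D (w - z)) \<le> (\<bar>g1 w - g1 z\<bar> + \<bar>g2 w - g2 z\<bar>) * norm (w - z)"
      using e0 e1 e2 e3 by (simp add: algebra_simps)
    then show "norm (norm ((f w - f z) - ?D (w - z)) / norm (w - z))
       \<le> \<bar>g1 w - g1 z\<bar> + \<bar>g2 w - g2 z\<bar>"
      using nz by (simp add: divide_le_eq)
  qed
  show ?thesis unfolding has_derivative_iff_norm
    using bl Lim_null_comparison[OF ev lim] by simp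
qed

lemma subgrad_convex:
  fixes f :: "real \<times> real \<Rightarrow> real"
  assumes S: "convex S"
    and sub: "\<And>u v. u \<in> S \<Longrightarrow> v \<in> S \<Longrightarrow>
        f v \<ge> f u + g1 u * (fst v - fst u) + g2 u * (snd v - snd u)"
  shows "convex_on S f"
proof (rule convex_onI)
  fix t :: real and x y assume t: "0 < t" "t < 1" and xy: "x \<in> S" "y \<in> S"
  define w where "w = (1 - t) *\<^sub>R x + t *\<^sub>R y"
  have w: "w \<in> S" using S xy t convexD[of S x y "1-t" t] unfolding w_def by auto
  have f1: "fst w = (1-t) * fst x + t * fst y" "snd w = (1-t) * snd x + t * snd y" unfolding w_def by simp_all
  have hx: "f x \<ge> f w + g1 w * (fst x - fst w) + g2 w * (snd x - snd w)" using sub w xy by blast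
  have hy: "f y \<ge> f w + g1 w * (fst y - fst w) + g2 w * (snd y - snd w)" using sub w xy by blast
  have "(1 - t) * f x + t * f y \<ge> (1-t) * (f w + g1 w * (fst x - fst w) + g2 w * (snd x - snd w))
      + t * (f w + g1 w * (fst y - fst w) + g2 w * (snd y - snd w))"
    using hx hy t by (intro add_mono mult_left_mono) auto
  moreover have "(1-t) * (f w + g1 w * (fst x - fst w) + g2 w * (snd x - snd w))
      + t * (f w + g1 w * (fst y - fst w) + g2 w * (snd y - snd w)) = f w" unfolding f1 by (simp add: algebra_simps)
  ultimately have "f w \<le> (1 - t) * f x + t * f y" by linarith
  then show "f ((1 - t) *\<^sub>R x + t *\<^sub>R y) \<le> (1 - t) * f x + t * f y" unfolding w_def .
qed (rule S)



definition Kt :: "(real \<Rightarrow> real) \<Rightarrow> real \<Rightarrow> real" where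
  "Kt g \<xi> = g \<xi> - \<xi> * deriv g \<xi>"

locale Lfun =
  fixes g :: "real \<Rightarrow> real" and \<gamma> :: real
  assumes gpos: "\<gamma> > 0"
    and gdiff: "\<And>x. g differentiable at x"
    and g'diff: "\<And>x. deriv g differentiable at x"
    and g''ge: "\<And>x. deriv (deriv g) x \<ge> \<gamma>"
begin

lemma gD: "(g has_real_derivative deriv g x) (at x)"
  using gdiff DERIV_deriv_iff_real_differentiable by blast

lemma g'D: "(deriv g has_real_derivative deriv (deriv g) x) (at x)"
  using g'diff DERIV_deriv_iff_real_differentiable by blast

lemma gcont: "isCont g x" using gD DERIV_isCont by blast
lemma g'cont: "isCont (deriv g) x" using g'D DERIV_isCont by blast

lemma gap: assumes "a \<le> b" shows "deriv g b - deriv g a \<ge> \<gamma> * (b - a)"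
proof (cases "a = b")
  case False
  then have "a < b" using assms by simp
  from MVT2[OF this, of "deriv g" "deriv (deriv g)"] g'D obtain z where
    "deriv g b - deriv g a = (b - a) * deriv (deriv g) z" by blast
  moreover have "(b - a) * deriv (deriv g) z \<ge> (b - a) * \<gamma>"
    using g''ge assms by (intro mult_left_mono) auto
  ultimately show ?thesis by (simp add: mult.commute)
qed simp

lemma mono': "a \<le> b \<Longrightarrow> deriv g a \<le> deriv g b"
  using gap[of a b] gpos by (smt (verit) mult_nonneg_nonneg)

lemma cvx: "g q \<ge> g a + deriv g a * (q - a)"
proof (cases q a rule: linorder_cases)
  case less
  from MVT2[OF less, of g "deriv g"] gD obtain z where z: "q < z" "z < a"
    "g a - g q = (a - q) * deriv g z" by blast
  have "deriv g z \<le> deriv g a" using z mono' by simp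
  then have "(a - q) * deriv g z \<le> (a - q) * deriv g a" using less by (intro mult_left_mono) auto
  then show ?thesis using z by (simp add: algebra_simps)
next
  case greater
  from MVT2[OF greater, of g "deriv g"] gD obtain z where z: "a < z" "z < q"
    "g q - g a = (q - a) * deriv g z" by blast
  have "deriv g a \<le> deriv g z" using z mono' by simp
  then have "(q - a) * deriv g a \<le> (q - a) * deriv g z" using greater by (intro mult_left_mono) auto
  then show ?thesis using z by (simp add: algebra_simps)
qed simp

lemma persp: assumes "t > 0" shows "t * g (w / t) \<ge> t * Kt g a + deriv g a * w"
proof -
  have "t * g (w / t) \<ge> t * (g a + deriv g a * (w / t - a))"
    using cvx[of a "w/t"] assms by (intro mult_left_mono) auto
  also have "t * (g a + deriv g a * (w / t - a)) = t * Kt g a + deriv g a * w"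
    using assms by (simp add: Kt_def algebra_simps)
  finally show ?thesis .
qed

lemma K1: assumes "a \<le> b" "b \<le> 0" shows "Kt g b - Kt g a \<ge> \<gamma> * (b - a) * (- b)"
proof -
  have c: "g b \<ge> g a + deriv g a * (b - a)" by (rule cvx)
  have "(- b) * (deriv g b - deriv g a) \<ge> (- b) * (\<gamma> * (b - a))"
    using gap[OF assms(1)] assms by (intro mult_left_mono) auto
  then show ?thesis using c unfolding Kt_def by (simp add: algebra_simps)
qed

lemma K2: assumes "0 \<le> a" "a \<le> b" shows "Kt g a - Kt g b \<ge> \<gamma> * (b - a) * a"
proof -
  have c: "g a \<ge> g b + deriv g b * (a - b)" by (rule cvx)
  have "a * (deriv g b - deriv g a) \<ge> a * (\<gamma> * (b - a))"
    using gap[OF assms(2)] assms by (intro mult_left_mono) auto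
  then show ?thesis using c unfolding Kt_def by (simp add: algebra_simps)
qed

lemma Kinc_w: "a \<le> b \<Longrightarrow> b \<le> 0 \<Longrightarrow> Kt g a \<le> Kt g b"
  using K1[of a b] gpos by (smt (verit) mult_nonneg_nonneg)

lemma Kdec_w: "0 \<le> a \<Longrightarrow> a \<le> b \<Longrightarrow> Kt g b \<le> Kt g a"
  using K2[of a b] gpos by (smt (verit) mult_nonneg_nonneg)

lemma Kinc: assumes "a < b" "b \<le> 0" shows "Kt g a < Kt g b"
proof -
  let ?m = "(a + b) / 2"
  have "Kt g ?m - Kt g a \<ge> \<gamma> * (?m - a) * (- ?m)" using K1[of a ?m] assms by simp
  moreover have "\<gamma> * (?m - a) * (- ?m) > 0" using assms gpos by (intro mult_pos_pos) auto
  moreover have "Kt g ?m \<le> Kt g b" using Kinc_w assms by simp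
  ultimately show ?thesis by linarith
qed

lemma Kdec: assumes "0 \<le> a" "a < b" shows "Kt g b < Kt g a"
proof -
  let ?m = "(a + b) / 2"
  have "Kt g ?m - Kt g b \<ge> \<gamma> * (b - ?m) * ?m" using K2[of ?m b] assms by simp
  moreover have "\<gamma> * (b - ?m) * ?m > 0" using assms gpos by (intro mult_pos_pos) auto
  moreover have "Kt g ?m \<le> Kt g a" using Kdec_w assms by simp
  ultimately show ?thesis by linarith
qed

lemma Kneg: assumes "\<xi> \<le> -1" shows "Kt g \<xi> \<le> Kt g 0 + \<gamma> * \<xi> / 4"
proof -
  have "Kt g (\<xi>/2) - Kt g \<xi> \<ge> \<gamma> * (\<xi>/2 - \<xi>) * (- (\<xi>/2))" using K1[of \<xi> "\<xi>/2"] assms by simp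
  moreover have "Kt g (\<xi>/2) \<le> Kt g 0" using Kinc_w[of "\<xi>/2" 0] assms by simp
  moreover have "\<gamma> * (\<xi>/2 - \<xi>) * (- (\<xi>/2)) \<ge> - \<gamma> * \<xi> / 4"
  proof -
    have "\<gamma> * (\<xi>/2 - \<xi>) * (- (\<xi>/2)) = (\<gamma>/4) * (\<xi> * \<xi>)" by (simp add: algebra_simps)
    moreover have "\<xi> * (\<xi> + 1) \<ge> 0" using assms by (intro mult_nonpos_nonpos) auto
    then have "\<xi> * \<xi> \<ge> - \<xi>" by (simp add: algebra_simps)
    then have "(\<gamma>/4) * (\<xi> * \<xi>) \<ge> (\<gamma>/4) * (- \<xi>)" using gpos by (intro mult_left_mono) auto
    ultimately show ?thesis by simp
  qed
  ultimately show ?thesis by linarith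
qed

lemma Kpos: assumes "\<xi> \<ge> 1" shows "Kt g \<xi> \<le> Kt g 0 - \<gamma> * \<xi> / 4"
proof -
  have "Kt g (\<xi>/2) - Kt g \<xi> \<ge> \<gamma> * (\<xi> - \<xi>/2) * (\<xi>/2)" using K2[of "\<xi>/2" \<xi>] assms by simp
  moreover have "Kt g (\<xi>/2) \<le> Kt g 0" using Kdec_w[of 0 "\<xi>/2"] assms by simp
  moreover have "\<gamma> * (\<xi> - \<xi>/2) * (\<xi>/2) \<ge> \<gamma> * \<xi> / 4"
  proof -
    have "\<gamma> * (\<xi> - \<xi>/2) * (\<xi>/2) = (\<gamma>/4) * (\<xi> * \<xi>)" by (simp add: algebra_simps)
    moreover have "\<xi> * (\<xi> - 1) \<ge> 0" using assms by (intro mult_nonneg_nonneg) auto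
    then have "\<xi> * \<xi> \<ge> \<xi>" by (simp add: algebra_simps)
    then have "(\<gamma>/4) * (\<xi> * \<xi>) \<ge> (\<gamma>/4) * \<xi>" using gpos by (intro mult_left_mono) auto
    ultimately show ?thesis by simp
  qed
  ultimately show ?thesis by linarith
qed

lemma Kcont: "isCont (Kt g) x"
proof -
  have "isCont (\<lambda>\<xi>. g \<xi> - \<xi> * deriv g \<xi>) x"
    using gcont g'cont by (intro continuous_intros) auto
  then show ?thesis unfolding Kt_def[abs_def] .
qed

lemma Kcont_on: "continuous_on A (Kt g)"
  using Kcont by (simp add: continuous_at_imp_continuous_on)

lemma Ham_eq: "Ham (\<lambda>_. g) l (deriv g a) = - Kt g a"
proof -
  have "(SUP q. deriv g a * q - g q) = deriv g a * a - g a"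
  proof (rule cSup_eq_maximum)
    show "deriv g a * a - g a \<in> range (\<lambda>q. deriv g a * q - g q)" by blast
    fix y assume "y \<in> range (\<lambda>q. deriv g a * q - g q)"
    then obtain q where "y = deriv g a * q - g q" by blast
    then show "y \<le> deriv g a * a - g a" using cvx[of a q] by (simp add: algebra_simps)
  qed
  then show ?thesis unfolding Ham_def Kt_def by (simp add: algebra_simps)
qed

end


lemma open_Quad: "open Quad" unfolding Quad_def by (intro open_Times open_greaterThan)
lemma convex_Quad: "convex Quad" unfolding Quad_def by (intro convex_Times convex_real_interval)
lemma Quad_iff: "z \<in> Quad \<longleftrightarrow> fst z > 0 \<and> snd z > 0" unfolding Quad_def by (cases z) auto

lemma Lfun_root_neg:
  assumes "Lfun g \<gamma>" "c \<le> g 0"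
  shows "\<exists>!\<xi>. \<xi> \<le> 0 \<and> Kt g \<xi> = c"
proof -
  interpret Lfun g \<gamma> by fact
  define \<xi>0 where "\<xi>0 = min (-1) (4 * (c - g 0) / \<gamma> - 1)"
  have x1: "\<xi>0 \<le> -1" unfolding \<xi>0_def by simp
  have "Kt g \<xi>0 \<le> Kt g 0 + \<gamma> * \<xi>0 / 4" using Kneg[OF x1] .
  moreover have "\<gamma> * \<xi>0 \<le> 4 * (c - g 0) - \<gamma>"
  proof -
    have "\<gamma> * \<xi>0 \<le> \<gamma> * (4 * (c - g 0) / \<gamma> - 1)"
      unfolding \<xi>0_def using gpos by (intro mult_left_mono) auto
    also have "\<gamma> * (4 * (c - g 0) / \<gamma> - 1) = 4 * (c - g 0) - \<gamma>" using gpos by (simp add: field_simps)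
    finally show ?thesis .
  qed
  moreover have "Kt g 0 = g 0" unfolding Kt_def by simp
  ultimately have lo: "Kt g \<xi>0 \<le> c" using gpos by (simp add: field_simps)
  have "\<exists>x. \<xi>0 \<le> x \<and> x \<le> 0 \<and> Kt g x = c"
    using x1 lo assms(2) \<open>Kt g 0 = g 0\<close> by (intro IVT' Kcont_on) auto
  then obtain x where x: "x \<le> 0" "Kt g x = c" by blast
  show ?thesis
  proof (rule ex1I[of _ x])
    show "x \<le> 0 \<and> Kt g x = c" using x by simp
    fix y assume y: "y \<le> 0 \<and> Kt g y = c"
    show "y = x"
    proof (rule ccontr)
      assume "y \<noteq> x"
      then consider "y < x" | "x < y" by linarith
      then show False using Kinc x y by (cases) (auto, fastforce+)
    qed
  qed
qed

lemma Lfun_root_pos: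
  assumes "Lfun g \<gamma>" "c \<le> g 0"
  shows "\<exists>!\<xi>. \<xi> \<ge> 0 \<and> Kt g \<xi> = c"
proof -
  interpret Lfun g \<gamma> by fact
  define \<xi>0 where "\<xi>0 = max 1 (4 * (g 0 - c) / \<gamma> + 1)"
  have x1: "\<xi>0 \<ge> 1" unfolding \<xi>0_def by simp
  have "Kt g \<xi>0 \<le> Kt g 0 - \<gamma> * \<xi>0 / 4" using Kpos[OF x1] .
  moreover have "\<gamma> * \<xi>0 \<ge> 4 * (g 0 - c) + \<gamma>"
  proof -
    have "\<gamma> * \<xi>0 \<ge> \<gamma> * (4 * (g 0 - c) / \<gamma> + 1)"
      unfolding \<xi>0_def using gpos by (intro mult_left_mono) auto
    moreover have "\<gamma> * (4 * (g 0 - c) / \<gamma> + 1) = 4 * (g 0 - c) + \<gamma>" using gpos by (simp add: field_simps)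
    ultimately show ?thesis by simp
  qed
  moreover have "Kt g 0 = g 0" unfolding Kt_def by simp
  ultimately have lo: "Kt g \<xi>0 \<le> c" using gpos by (simp add: field_simps)
  have "\<exists>x. 0 \<le> x \<and> x \<le> \<xi>0 \<and> (\<lambda>t. - Kt g t) x = - c"
    using x1 lo assms(2) \<open>Kt g 0 = g 0\<close> by (intro IVT' continuous_intros Kcont_on) auto
  then obtain x where x: "x \<ge> 0" "Kt g x = c" by auto
  show ?thesis
  proof (rule ex1I[of _ x])
    show "x \<ge> 0 \<and> Kt g x = c" using x by simp
    fix y assume y: "y \<ge> 0 \<and> Kt g y = c"
    show "y = x"
    proof (rule ccontr)
      assume "y \<noteq> x"
      then consider "y < x" | "x < y" by linarith
      then show False using Kdec x y by (cases) (auto, fastforce+)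
    qed
  qed
qed



locale Two = J: Lfun gj \<gamma> + I: Lfun gi \<gamma> for gj gi \<gamma> +
  fixes c :: real
  assumes cj: "c \<le> gj 0" and ci: "c \<le> gi 0"
begin

definition G where "G z \<tau> = Kt gj (- fst z / \<tau>) - Kt gi (snd z / (1 - \<tau>))"

lemma G_mono: assumes "z \<in> Quad" "0 < \<tau>" "\<tau> < \<tau>'" "\<tau>' < 1" shows "G z \<tau> < G z \<tau>'"
proof -
  have y: "fst z > 0" and x: "snd z > 0" using assms(1) by (auto simp: Quad_iff)
  have "fst z / \<tau>' < fst z / \<tau>" using y assms by (intro divide_strict_left_mono) auto
  then have a: "- fst z / \<tau> < - fst z / \<tau>'" by simp
  have a0: "- fst z / \<tau>' \<le> 0" using y assms by simp
  have "snd z / (1 - \<tau>) < snd z / (1 - \<tau>')" using x assms by (intro divide_strict_left_mono) auto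
  moreover have "0 \<le> snd z / (1 - \<tau>)" using x assms by simp
  ultimately have "Kt gi (snd z / (1 - \<tau>')) < Kt gi (snd z / (1 - \<tau>))" by (rule I.Kdec[rotated])
  moreover have "Kt gj (- fst z / \<tau>) < Kt gj (- fst z / \<tau>')" using J.Kinc[OF a a0] .
  ultimately show ?thesis unfolding G_def by simp
qed

lemma G_mono_w: assumes "z \<in> Quad" "0 < \<tau>" "\<tau> \<le> \<tau>'" "\<tau>' < 1" shows "G z \<tau> \<le> G z \<tau>'"
  using G_mono[OF assms(1,2) _ assms(4)] assms(3) by (cases "\<tau> = \<tau>'") (auto simp: less_le)

lemma G_cont_z: assumes "0 < \<tau>" "\<tau> < 1" shows "isCont (\<lambda>z. G z \<tau>) z0"
proof -
  have "isCont (\<lambda>z. Kt gj (- fst z / \<tau>)) z0"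
    apply (rule isCont_o2[OF _ J.Kcont]) using assms by (auto intro!: continuous_intros)
  moreover have "isCont (\<lambda>z. Kt gi (snd z / (1 - \<tau>))) z0"
    apply (rule isCont_o2[OF _ I.Kcont]) using assms by (auto intro!: continuous_intros)
  ultimately show ?thesis unfolding G_def by (intro continuous_intros)
qed

lemma G_cont_tau: assumes "0 < a" "b < 1" shows "continuous_on {a..b} (G z)"
proof (rule continuous_at_imp_continuous_on, rule ballI)
  fix \<tau> assume t: "\<tau> \<in> {a..b}"
  then have t0: "\<tau> \<noteq> 0" "1 - \<tau> \<noteq> 0" using assms by auto
  have "isCont (\<lambda>\<tau>. Kt gj (- fst z / \<tau>)) \<tau>"
    by (rule isCont_o2[OF _ J.Kcont]) (intro continuous_intros t0)
  moreover have "isCont (\<lambda>\<tau>. Kt gi (snd z / (1 - \<tau>))) \<tau>"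
    by (rule isCont_o2[OF _ I.Kcont]) (intro continuous_intros t0)
  ultimately show "isCont (G z) \<tau>" unfolding G_def[abs_def] by (intro continuous_intros)
qed

lemma G_root: assumes z: "z \<in> Quad" shows "\<exists>\<tau>. 0 < \<tau> \<and> \<tau> < 1 \<and> G z \<tau> = 0"
proof -
  define y where "y = fst z"
  define x where "x = snd z"
  have y: "y > 0" and x: "x > 0" using z by (auto simp: Quad_iff y_def x_def)
  have gp: "\<gamma> > 0" by (rule J.gpos)
  define T where "T = min (-1) (4 * (Kt gi (2 * x) - Kt gj 0) / \<gamma> - 1)"
  have T1: "T \<le> -1" unfolding T_def by simp
  have gT: "\<gamma> * T \<le> 4 * (Kt gi (2 * x) - Kt gj 0) - \<gamma>"
  proof -
    have "\<gamma> * T \<le> \<gamma> * (4 * (Kt gi (2 * x) - Kt gj 0) / \<gamma> - 1)"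
      unfolding T_def using gp by (intro mult_left_mono) auto
    also have "\<dots> = 4 * (Kt gi (2 * x) - Kt gj 0) - \<gamma>" using gp by (simp add: field_simps)
    finally show ?thesis .
  qed
  define ta where "ta = min (1/2) (y / (- T))"
  have "y / (- T) > 0" using y T1 by (intro divide_pos_pos) auto
  then have ta0: "ta > 0" unfolding ta_def by simp
  have ta1: "ta \<le> 1/2" unfolding ta_def by (rule min.cobounded1)
  have "ta \<le> y / (- T)" unfolding ta_def by simp
  then have "ta * (- T) \<le> y / (- T) * (- T)" using T1 by (intro mult_right_mono) auto
  then have "ta * (- T) \<le> y" using T1 by simp
  then have "- T \<le> y / ta" using ta0 by (simp add: le_divide_eq mult.commute)
  then have xi: "- y / ta \<le> T" by simp
  have "- y / ta \<le> -1" using xi T1 by linarith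
  then have "Kt gj (- y / ta) \<le> Kt gj 0 + \<gamma> * (- y / ta) / 4" by (rule J.Kneg)
  moreover have "\<gamma> * (- y / ta) \<le> \<gamma> * T" using xi gp by (intro mult_left_mono) auto
  ultimately have A1: "Kt gj (- y / ta) < Kt gi (2 * x)" using gT gp by (simp add: field_simps)
  have "x / (1 - ta) \<le> x / (1/2)" using x ta1 ta0 by (intro divide_left_mono) auto
  moreover have "0 \<le> x / (1 - ta)" using x ta1 by simp
  ultimately have "Kt gi (2 * x) \<le> Kt gi (x / (1 - ta))" using I.Kdec_w by simp
  with A1 have Ga: "G z ta < 0" unfolding G_def y_def x_def by simp
  define T' where "T' = max 1 (4 * (Kt gi 0 - Kt gj (- 2 * y)) / \<gamma> + 1)"
  have T'1: "T' \<ge> 1" unfolding T'_def by simp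
  have gT': "\<gamma> * T' \<ge> 4 * (Kt gi 0 - Kt gj (- 2 * y)) + \<gamma>"
  proof -
    have "\<gamma> * T' \<ge> \<gamma> * (4 * (Kt gi 0 - Kt gj (- 2 * y)) / \<gamma> + 1)"
      unfolding T'_def using gp by (intro mult_left_mono) auto
    moreover have "\<gamma> * (4 * (Kt gi 0 - Kt gj (- 2 * y)) / \<gamma> + 1) = 4 * (Kt gi 0 - Kt gj (- 2 * y)) + \<gamma>"
      using gp by (simp add: field_simps)
    ultimately show ?thesis by simp
  qed
  define sb where "sb = min (1/2) (x / T')"
  define tb where "tb = 1 - sb"
  have sb0: "sb > 0" unfolding sb_def using x T'1 by simp
  have sb1: "sb \<le> 1/2" unfolding sb_def by (rule min.cobounded1)
  have "sb \<le> x / T'" unfolding sb_def by simp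
  then have "sb * T' \<le> x" using T'1 by (simp add: le_divide_eq)
  then have xi': "T' \<le> x / sb" using sb0 by (simp add: le_divide_eq mult.commute)
  have "x / sb \<ge> 1" using xi' T'1 by linarith
  then have "Kt gi (x / sb) \<le> Kt gi 0 - \<gamma> * (x / sb) / 4" by (rule I.Kpos)
  moreover have "\<gamma> * T' \<le> \<gamma> * (x / sb)" using xi' gp by (intro mult_left_mono) auto
  ultimately have B1: "Kt gi (x / sb) < Kt gj (- 2 * y)" using gT' gp by (simp add: field_simps)
  have tb1: "tb \<ge> 1/2" "tb < 1" unfolding tb_def using sb0 sb1 by auto
  have "y / tb \<le> y / (1/2)" using y tb1 by (intro divide_left_mono) auto
  then have "- 2 * y \<le> - y / tb" by simp
  moreover have "- y / tb \<le> 0" using y tb1 by simp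
  ultimately have "Kt gj (- 2 * y) \<le> Kt gj (- y / tb)" using J.Kinc_w by simp
  moreover have "1 - tb = sb" unfolding tb_def by simp
  ultimately have Gb: "G z tb > 0" using B1 unfolding G_def y_def x_def by simp
  have "\<exists>t. ta \<le> t \<and> t \<le> tb \<and> G z t = 0"
    using Ga Gb ta1 tb1 by (intro IVT' G_cont_tau ta0) auto
  then obtain t where "ta \<le> t" "t \<le> tb" "G z t = 0" by blast
  then show ?thesis using ta0 tb1 by (intro exI[of _ t]) auto
qed

definition ts where "ts z = (SOME \<tau>. 0 < \<tau> \<and> \<tau> < 1 \<and> G z \<tau> = 0)"

lemma ts: assumes "z \<in> Quad" shows "0 < ts z" "ts z < 1" "G z (ts z) = 0"
  using someI_ex[OF G_root[OF assms]] unfolding ts_def by auto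

lemma ts_cont: "continuous_on Quad ts"
proof (rule continuous_at_imp_continuous_on, rule ballI)
  fix z0 assume z0: "z0 \<in> Quad"
  define t0 where "t0 = ts z0"
  have t0: "0 < t0" "t0 < 1" "G z0 t0 = 0" using ts[OF z0] unfolding t0_def by auto
  show "isCont ts z0" unfolding isCont_def tendsto_iff
  proof (intro allI impI)
    fix e :: real assume e: "e > 0"
    define \<epsilon> where "\<epsilon> = min (e/2) (min (t0/2) ((1 - t0)/2))"
    have "\<epsilon> \<le> e/2" "\<epsilon> \<le> t0/2" "\<epsilon> \<le> (1 - t0)/2"
      unfolding \<epsilon>_def by (rule min.cobounded1, rule min.coboundedI2[OF min.cobounded1], rule min.coboundedI2[OF min.cobounded2])
    moreover have "\<epsilon> > 0" unfolding \<epsilon>_def using e t0 by auto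
    ultimately have ep: "\<epsilon> > 0" "\<epsilon> < e" "0 < t0 - \<epsilon>" "t0 + \<epsilon> < 1"
      using e t0 by (simp_all add: field_simps)
    have g1: "G z0 (t0 - \<epsilon>) < 0" using G_mono[OF z0, of "t0 - \<epsilon>" t0] ep t0 by simp
    have g2: "G z0 (t0 + \<epsilon>) > 0" using G_mono[OF z0, of t0 "t0 + \<epsilon>"] ep t0 by simp
    have ev1: "eventually (\<lambda>z. G z (t0 - \<epsilon>) < 0) (at z0)"
      using G_cont_z[of "t0 - \<epsilon>" z0] ep t0 g1 unfolding isCont_def
      by (auto dest: order_tendstoD)
    have ev2: "eventually (\<lambda>z. G z (t0 + \<epsilon>) > 0) (at z0)"
      using G_cont_z[of "t0 + \<epsilon>" z0] ep t0 g2 unfolding isCont_def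
      by (auto dest: order_tendstoD)
    have ev3: "eventually (\<lambda>z. z \<in> Quad) (at z0)" by (rule eventually_at_in_open'[OF open_Quad z0])
    show "eventually (\<lambda>z. dist (ts z) (ts z0) < e) (at z0)"
      using ev1 ev2 ev3
    proof eventually_elim
      case (elim z)
      note tz = ts[OF elim(3)]
      have "t0 - \<epsilon> < ts z"
      proof (rule ccontr)
        assume "\<not> t0 - \<epsilon> < ts z"
        then have "G z (ts z) \<le> G z (t0 - \<epsilon>)" using G_mono_w[OF elim(3) tz(1)] ep by simp
        then show False using elim tz by simp
      qed
      moreover have "ts z < t0 + \<epsilon>"
      proof (rule ccontr)
        assume "\<not> ts z < t0 + \<epsilon>"
        then have "G z (t0 + \<epsilon>) \<le> G z (ts z)" using G_mono_w[OF elim(3), of "t0 + \<epsilon>" "ts z"] ep tz by simp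
        then show False using elim tz by simp
      qed
      ultimately show ?case using ep unfolding t0_def dist_real_def by auto
    qed
  qed
qed

definition aa where "aa z = - fst z / ts z"
definition bb where "bb z = snd z / (1 - ts z)"

lemma aa_neg: "z \<in> Quad \<Longrightarrow> aa z < 0"
  using ts[of z] unfolding aa_def by (auto simp: Quad_iff)
lemma bb_pos: "z \<in> Quad \<Longrightarrow> bb z > 0"
  using ts[of z] unfolding bb_def by (auto simp: Quad_iff)
lemma Kab: "z \<in> Quad \<Longrightarrow> Kt gj (aa z) = Kt gi (bb z)"
  using ts(3)[of z] unfolding aa_def bb_def G_def by simp

lemma aa_cont: "continuous_on Quad aa"
  unfolding aa_def[abs_def] using ts_cont ts(1)
  by (intro continuous_intros) (auto simp: less_le)
lemma bb_cont: "continuous_on Quad bb"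
  unfolding bb_def[abs_def] using ts_cont
  by (intro continuous_intros) (use ts(2) in force)+

end


context Two begin

definition e1 where "e1 \<tau> s = (if s = 0 then 0 else if \<tau> = 0 then \<infinity> else ereal (\<tau> * gj (- s / \<tau>) - \<tau> * c))"
definition e2 where "e2 \<tau> s = (if s = 0 then ereal c else if \<tau> = 1 then \<infinity> else ereal ((1 - \<tau>) * gi (s / (1 - \<tau>)) + \<tau> * c))"
definition fv where "fv a b z = Kt gj a - deriv gj a * fst z + deriv gi b * snd z"

lemma lower:
  assumes z: "z \<in> Quad" and t: "0 \<le> t1" "t1 \<le> t2" "t2 \<le> 1"
    and K: "Kt gj a = Kt gi b" and cond: "t1 = t2 \<or> Kt gj a \<le> c"
  shows "e1 t1 (fst z) + e2 t2 (snd z) \<ge> ereal (fv a b z)"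
proof -
  have y: "fst z > 0" and x: "snd z > 0" using z by (auto simp: Quad_iff)
  consider "t1 = 0" | "t1 \<noteq> 0" "t2 = 1" | "0 < t1" "t2 < 1" using t by linarith
  then show ?thesis
  proof cases
    case 1 then show ?thesis using y x by (simp add: e1_def e2_def)
  next
    case 2 then show ?thesis using y x by (simp add: e1_def e2_def)
  next
    case 3
    have p1: "t1 * gj (- fst z / t1) \<ge> t1 * Kt gj a + deriv gj a * - fst z" by (rule J.persp) fact
    have p2: "(1 - t2) * gi (snd z / (1 - t2)) \<ge> (1 - t2) * Kt gi b + deriv gi b * snd z"
      by (rule I.persp) (use 3 in simp)
    have h3: "(t2 - t1) * (c - Kt gj a) \<ge> 0" using cond t by auto
    have eq: "t1 * Kt gj a + (1 - t2) * Kt gi b - t1 * c + t2 * c = Kt gj a + (t2 - t1) * (c - Kt gj a)"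
      using K by (simp add: algebra_simps)
    have eq2: "deriv gj a * - fst z = - (deriv gj a * fst z)" by simp
    have real: "fv a b z \<le> (t1 * gj (- fst z / t1) - t1 * c) + ((1 - t2) * gi (snd z / (1 - t2)) + t2 * c)"
      unfolding fv_def using p1 p2 h3 eq eq2 by linarith
    have "e1 t1 (fst z) + e2 t2 (snd z) = ereal ((t1 * gj (- fst z / t1) - t1 * c) + ((1 - t2) * gi (snd z / (1 - t2)) + t2 * c))"
      using 3 y x by (simp add: e1_def e2_def)
    then show ?thesis using real by (simp only: ereal_less_eq)
  qed
qed

definition Dimp where "Dimp z = (INF \<tau> \<in> {0..1}. e1 \<tau> (fst z) + e2 \<tau> (snd z))"
definition Djun where "Djun z = (INF t \<in> {(t1, t2). 0 \<le> t1 \<and> t1 \<le> t2 \<and> t2 \<le> 1}. e1 (fst t) (fst z) + e2 (snd t) (snd z))"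

definition fimp where "fimp z = fv (aa z) (bb z) z"

lemma value_at:
  assumes z: "z \<in> Quad" and t: "0 < t1" "t1 \<le> t2" "t2 < 1"
    and a: "t1 * a = - fst z" and b: "(1 - t2) * b = snd z"
  shows "e1 t1 (fst z) + e2 t2 (snd z) = ereal (t1 * Kt gj a + (1 - t2) * Kt gi b + (t2 - t1) * c - deriv gj a * fst z + deriv gi b * snd z)"
proof -
  have y: "fst z > 0" and x: "snd z > 0" using z by (auto simp: Quad_iff)
  have "(t1 * a) / t1 = a" using t(1) by simp
  then have a': "- fst z / t1 = a" unfolding a .
  have "((1 - t2) * b) / (1 - t2) = b" using t by simp
  then have b': "snd z / (1 - t2) = b" unfolding b .
  have e1v: "e1 t1 (fst z) = ereal (t1 * gj a - t1 * c)"
    unfolding e1_def a' using t y by simp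
  have e2v: "e2 t2 (snd z) = ereal ((1 - t2) * gi b + t2 * c)"
    unfolding e2_def b' using t x by simp
  have h1: "t1 * gj a = t1 * Kt gj a + (t1 * a) * deriv gj a" unfolding Kt_def by (simp add: distrib_left mult.assoc right_diff_distrib)
  have h2: "(1 - t2) * gi b = (1 - t2) * Kt gi b + ((1 - t2) * b) * deriv gi b" unfolding Kt_def by (simp only: distrib_left mult.assoc right_diff_distrib)
  have h3: "(t1 * a) * deriv gj a = - (deriv gj a * fst z)" unfolding a by simp
  have h4: "((1 - t2) * b) * deriv gi b = deriv gi b * snd z" unfolding b by simp
  have h5: "(t2 - t1) * c = t2 * c - t1 * c" by (simp add: algebra_simps)
  have "(t1 * gj a - t1 * c) + ((1 - t2) * gi b + t2 * c) =
      t1 * Kt gj a + (1 - t2) * Kt gi b + (t2 - t1) * c - deriv gj a * fst z + deriv gi b * snd z"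
    using h1 h2 h3 h4 h5 by linarith
  then show ?thesis unfolding e1v e2v by simp
qed

lemma Dimp_eq: assumes z: "z \<in> Quad" shows "Dimp z = ereal (fimp z)"
proof (rule antisym)
  note tz = ts[OF z]
  have "e1 (ts z) (fst z) + e2 (ts z) (snd z) = ereal (fimp z)"
  proof -
    have "ts z * aa z = - fst z" unfolding aa_def using tz by simp
    moreover have "(1 - ts z) * bb z = snd z" unfolding bb_def using tz by simp
    ultimately have "e1 (ts z) (fst z) + e2 (ts z) (snd z) = ereal (ts z * Kt gj (aa z) + (1 - ts z) * Kt gi (bb z) + (ts z - ts z) * c - deriv gj (aa z) * fst z + deriv gi (bb z) * snd z)"
      using tz by (intro value_at z) auto
    also have "\<dots> = ereal (fimp z)" unfolding fimp_def fv_def using Kab[OF z] by (simp add: algebra_simps)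
    finally show ?thesis .
  qed
  moreover have "ts z \<in> {0..1}" using tz by simp
  ultimately show "Dimp z \<le> ereal (fimp z)" unfolding Dimp_def
    using INF_lower[of "ts z" "{0..1}" "\<lambda>\<tau>. e1 \<tau> (fst z) + e2 \<tau> (snd z)"] by simp
  show "ereal (fimp z) \<le> Dimp z" unfolding Dimp_def fimp_def
  proof (rule INF_greatest)
    fix \<tau> :: real assume "\<tau> \<in> {0..1}"
    then show "ereal (fv (aa z) (bb z) z) \<le> e1 \<tau> (fst z) + e2 \<tau> (snd z)"
      using Kab[OF z] by (intro lower[OF z]) auto
  qed
qed

lemma Dimp_sub: assumes u: "u \<in> Quad" and v: "v \<in> Quad"
  shows "fimp v \<ge> fimp u + (- deriv gj (aa u)) * (fst v - fst u) + deriv gi (bb u) * (snd v - snd u)"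
proof -
  have "ereal (fv (aa u) (bb u) v) \<le> Dimp v" unfolding Dimp_def
  proof (rule INF_greatest)
    fix \<tau> :: real assume "\<tau> \<in> {0..1}"
    then show "ereal (fv (aa u) (bb u) v) \<le> e1 \<tau> (fst v) + e2 \<tau> (snd v)"
      using Kab[OF u] by (intro lower[OF v]) auto
  qed
  then have "fv (aa u) (bb u) v \<le> fimp v" using Dimp_eq[OF v] by simp
  moreover have "fv (aa u) (bb u) v = fimp u + (- deriv gj (aa u)) * (fst v - fst u) + deriv gi (bb u) * (snd v - snd u)"
    unfolding fimp_def fv_def by (simp add: algebra_simps)
  ultimately show ?thesis by simp
qed

end


context Two begin

lemma cert:
  fixes f :: "real \<times> real \<Rightarrow> real"
  assumes cA: "continuous_on Quad A" and cB: "continuous_on Quad B"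
    and K: "\<And>z. z \<in> Quad \<Longrightarrow> Kt gj (A z) = Kt gi (B z)"
    and fz: "\<And>z. z \<in> Quad \<Longrightarrow> f z = fv (A z) (B z) z"
    and sub: "\<And>u v. u \<in> Quad \<Longrightarrow> v \<in> Quad \<Longrightarrow>
        f v \<ge> f u + (- deriv gj (A u)) * (fst v - fst u) + deriv gi (B u) * (snd v - snd u)"
  shows "C1_HJ (Ham (\<lambda>_. gj) 0) (Ham (\<lambda>_. gi) 0) f"
proof -
  have c1: "continuous_on Quad (\<lambda>z. deriv gj (A z))"
    by (rule continuous_on_compose2[of UNIV "deriv gj" Quad A])
       (auto simp: continuous_at_imp_continuous_on J.g'cont cA)
  have c2: "continuous_on Quad (\<lambda>z. deriv gi (B z))"
    by (rule continuous_on_compose2[of UNIV "deriv gi" Quad B])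
       (auto simp: continuous_at_imp_continuous_on I.g'cont cB)
  have c1': "continuous_on Quad (\<lambda>z. - deriv gj (A z))" using c1 by (intro continuous_intros)
  have cv: "convex_on Quad f"
    by (rule subgrad_convex[OF convex_Quad, of f "\<lambda>z. - deriv gj (A z)" "\<lambda>z. deriv gi (B z)"]) (rule sub)
  have all: "\<forall>z\<in>Quad. (f has_derivative (\<lambda>(h, k). - deriv gj (A z) * h + deriv gi (B z) * k)) (at z) \<and>
      f z - snd z * deriv gi (B z) - fst z * - deriv gj (A z) + Ham (\<lambda>_. gi) 0 (deriv gi (B z)) = 0 \<and>
      f z - snd z * deriv gi (B z) - fst z * - deriv gj (A z) + Ham (\<lambda>_. gj) 0 (- (- deriv gj (A z))) = 0"
  proof (intro ballI conjI)
    fix z assume z: "z \<in> Quad"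
    show "(f has_derivative (\<lambda>(h, k). - deriv gj (A z) * h + deriv gi (B z) * k)) (at z)"
      by (rule subgrad_deriv[OF open_Quad z c1' c2]) (rule sub)
    have H1: "Ham (\<lambda>_. gi) 0 (deriv gi (B z)) = - Kt gi (B z)" by (rule I.Ham_eq)
    have H2: "Ham (\<lambda>_. gj) 0 (- (- deriv gj (A z))) = - Kt gj (A z)" using J.Ham_eq by simp
    show "f z - snd z * deriv gi (B z) - fst z * - deriv gj (A z) + Ham (\<lambda>_. gi) 0 (deriv gi (B z)) = 0"
      using H1 fz[OF z] K[OF z] unfolding fv_def by (simp add: algebra_simps)
    show "f z - snd z * deriv gi (B z) - fst z * - deriv gj (A z) + Ham (\<lambda>_. gj) 0 (- (- deriv gj (A z))) = 0"
      using H2 fz[OF z] unfolding fv_def by (simp add: algebra_simps)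
  qed
  show ?thesis unfolding C1_HJ_def
    apply (rule conjI[OF cv])
    apply (rule exI[of _ "\<lambda>z. - deriv gj (A z)"])
    apply (rule exI[of _ "\<lambda>z. deriv gi (B z)"])
    using c1' c2 all by simp
qed

lemma C1_imp: "C1_HJ (Ham (\<lambda>_. gj) 0) (Ham (\<lambda>_. gi) 0) (\<lambda>z. real_of_ereal (Dimp z))"
proof (rule cert[OF aa_cont bb_cont Kab])
  fix z assume "z \<in> Quad"
  then show "real_of_ereal (Dimp z) = fv (aa z) (bb z) z" using Dimp_eq fimp_def by simp
next
  fix u v assume "u \<in> Quad" "v \<in> Quad"
  then show "real_of_ereal (Dimp v) \<ge> real_of_ereal (Dimp u) + (- deriv gj (aa u)) * (fst v - fst u) + deriv gi (bb u) * (snd v - snd u)"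
    using Dimp_sub Dimp_eq by simp
qed

lemma Lfun_j: "Lfun gj \<gamma>" using J.gpos J.gdiff J.g'diff J.g''ge by (unfold_locales) auto
lemma Lfun_i: "Lfun gi \<gamma>" using I.gpos I.gdiff I.g'diff I.g''ge by (unfold_locales) auto

definition xm where "xm = (THE \<xi>. \<xi> \<le> 0 \<and> Kt gj \<xi> - c = 0)"
definition xp where "xp = (THE \<xi>. \<xi> \<ge> 0 \<and> Kt gi \<xi> - c = 0)"

lemma xm: "xm \<le> 0" "Kt gj xm = c"
proof -
  have "\<exists>!\<xi>. \<xi> \<le> 0 \<and> Kt gj \<xi> = c" by (rule Lfun_root_neg[OF Lfun_j cj])
  then have "\<exists>!\<xi>. \<xi> \<le> 0 \<and> Kt gj \<xi> - c = 0" by simp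
  from theI'[OF this] show "xm \<le> 0" "Kt gj xm = c" unfolding xm_def by auto
qed

lemma xp: "xp \<ge> 0" "Kt gi xp = c"
proof -
  have "\<exists>!\<xi>. \<xi> \<ge> 0 \<and> Kt gi \<xi> = c" by (rule Lfun_root_pos[OF Lfun_i ci])
  then have "\<exists>!\<xi>. \<xi> \<ge> 0 \<and> Kt gi \<xi> - c = 0" by simp
  from theI'[OF this] show "xp \<ge> 0" "Kt gi xp = c" unfolding xp_def by auto
qed

definition AJ where "AJ z = min (aa z) xm"
definition BJ where "BJ z = max (bb z) xp"
definition fjun where "fjun z = fv (AJ z) (BJ z) z"

lemma case_le: assumes z: "z \<in> Quad" and M: "Kt gj (aa z) \<le> c"
  shows "AJ z = aa z" "BJ z = bb z"
proof -
  have "aa z \<le> xm"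
  proof (rule ccontr)
    assume "\<not> aa z \<le> xm"
    then have "Kt gj xm < Kt gj (aa z)" using J.Kinc aa_neg[OF z] by simp
    then show False using xm M by simp
  qed
  then show "AJ z = aa z" unfolding AJ_def by simp
  have "xp \<le> bb z"
  proof (rule ccontr)
    assume "\<not> xp \<le> bb z"
    then have "Kt gi xp < Kt gi (bb z)" using I.Kdec bb_pos[OF z] by simp
    then show False using xp M Kab[OF z] by simp
  qed
  then show "BJ z = bb z" unfolding BJ_def by simp
qed

lemma case_gt: assumes z: "z \<in> Quad" and M: "Kt gj (aa z) > c"
  shows "xm < aa z" "bb z < xp" "AJ z = xm" "BJ z = xp"
proof -
  show 1: "xm < aa z"
  proof (rule ccontr)
    assume "\<not> xm < aa z"
    then have "Kt gj (aa z) \<le> Kt gj xm" using J.Kinc_w[of "aa z" xm] xm by simp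
    then show False using xm M by simp
  qed
  then show "AJ z = xm" unfolding AJ_def by simp
  show 2: "bb z < xp"
  proof (rule ccontr)
    assume "\<not> bb z < xp"
    then have "Kt gi (bb z) \<le> Kt gi xp" using I.Kdec_w[of xp "bb z"] xp by simp
    then show False using xp M Kab[OF z] by simp
  qed
  then show "BJ z = xp" unfolding BJ_def by simp
qed

lemma KJ: assumes z: "z \<in> Quad" shows "Kt gj (AJ z) = Kt gi (BJ z)" "Kt gj (AJ z) \<le> c"
proof -
  show "Kt gj (AJ z) = Kt gi (BJ z)"
    using case_le[OF z] case_gt[OF z] Kab[OF z] xm xp by (cases "Kt gj (aa z) \<le> c") auto
  show "Kt gj (AJ z) \<le> c"
    using case_le[OF z] case_gt[OF z] xm by (cases "Kt gj (aa z) \<le> c") auto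
qed

lemma Djun_ge: assumes z: "z \<in> Quad" and u: "u \<in> Quad" shows "ereal (fv (AJ u) (BJ u) z) \<le> Djun z"
  unfolding Djun_def
proof (rule INF_greatest)
  fix t :: "real \<times> real" assume "t \<in> {(t1, t2). 0 \<le> t1 \<and> t1 \<le> t2 \<and> t2 \<le> 1}"
  then show "ereal (fv (AJ u) (BJ u) z) \<le> e1 (fst t) (fst z) + e2 (snd t) (snd z)"
    using KJ[OF u] by (intro lower[OF z]) auto
qed

lemma Djun_eq: assumes z: "z \<in> Quad" shows "Djun z = ereal (fjun z)"
proof (rule antisym)
  show "ereal (fjun z) \<le> Djun z" unfolding fjun_def by (rule Djun_ge[OF z z])
  note tz = ts[OF z]
  have y: "fst z > 0" and x: "snd z > 0" using z by (auto simp: Quad_iff)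
  let ?T = "{(t1, t2). 0 \<le> (t1::real) \<and> t1 \<le> t2 \<and> t2 \<le> 1}"
  let ?F = "\<lambda>t. e1 (fst t) (fst z) + e2 (snd t) (snd z)"
  obtain t1 t2 where tT: "(t1, t2) \<in> ?T" and val: "?F (t1, t2) = ereal (fjun z)"
  proof (cases "Kt gj (aa z) \<le> c")
    case True
    note ab = case_le[OF z True]
    have "ts z * aa z = - fst z" unfolding aa_def using tz by simp
    moreover have "(1 - ts z) * bb z = snd z" unfolding bb_def using tz by simp
    ultimately have "?F (ts z, ts z) = ereal (ts z * Kt gj (aa z) + (1 - ts z) * Kt gi (bb z) + (ts z - ts z) * c - deriv gj (aa z) * fst z + deriv gi (bb z) * snd z)"
      using tz by (simp only: fst_conv snd_conv, intro value_at z) auto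
    also have "\<dots> = ereal (fjun z)" unfolding fjun_def fv_def ab using Kab[OF z] by (simp add: algebra_simps)
    finally show ?thesis using that[of "ts z" "ts z"] tz by simp
  next
    case False
    then have M: "Kt gj (aa z) > c" by simp
    note g = case_gt[OF z M]
    have xm0: "xm < 0" using g aa_neg[OF z] by simp
    have xp0: "xp > 0" using g bb_pos[OF z] by simp
    define s1 where "s1 = fst z / (- xm)"
    define s2 where "s2 = 1 - snd z / xp"
    have s1p: "s1 > 0" unfolding s1_def using y xm0 by (intro divide_pos_pos) auto
    have s2p: "s2 < 1" unfolding s2_def using x xp0 by simp
    have "fst z / (- aa z) = ts z" unfolding aa_def using y tz by simp
    moreover have "fst z / (- xm) \<le> fst z / (- aa z)"
      using g y aa_neg[OF z] xm0 by (intro divide_left_mono) (auto intro: mult_neg_neg)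
    ultimately have s1t: "s1 \<le> ts z" unfolding s1_def by simp
    have "snd z / bb z = 1 - ts z" unfolding bb_def using x tz by simp
    moreover have "snd z / xp \<le> snd z / bb z"
      using g x bb_pos[OF z] by (intro divide_left_mono) (auto intro: mult_pos_pos)
    ultimately have s2t: "ts z \<le> s2" unfolding s2_def by simp
    have a1: "s1 * xm = - fst z" unfolding s1_def using xm0 by simp
    have b1: "(1 - s2) * xp = snd z" unfolding s2_def using xp0 by simp
    have "?F (s1, s2) = ereal (s1 * Kt gj xm + (1 - s2) * Kt gi xp + (s2 - s1) * c - deriv gj xm * fst z + deriv gi xp * snd z)"
      using s1p s2p s1t s2t a1 b1 by (simp only: fst_conv snd_conv, intro value_at z) auto
    also have "\<dots> = ereal (fjun z)" unfolding fjun_def fv_def g(3,4) using xm(2) xp(2) by (simp add: algebra_simps)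
    finally show ?thesis using that[of s1 s2] s1p s2p s1t s2t by simp
  qed
  then show "Djun z \<le> ereal (fjun z)" unfolding Djun_def
    using INF_lower[OF tT, of ?F] by simp
qed

lemma AJ_cont: "continuous_on Quad AJ"
  unfolding AJ_def[abs_def] using aa_cont by (intro continuous_intros)
lemma BJ_cont: "continuous_on Quad BJ"
  unfolding BJ_def[abs_def] using bb_cont by (intro continuous_intros)

lemma C1_jun: "C1_HJ (Ham (\<lambda>_. gj) 0) (Ham (\<lambda>_. gi) 0) (\<lambda>z. real_of_ereal (Djun z))"
proof (rule cert[OF AJ_cont BJ_cont KJ(1)])
  fix z assume "z \<in> Quad"
  then show "real_of_ereal (Djun z) = fv (AJ z) (BJ z) z" using Djun_eq fjun_def by simp
next
  fix u v assume u: "u \<in> Quad" and v: "v \<in> Quad"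
  have "fv (AJ u) (BJ u) v \<le> fjun v" using Djun_ge[OF v u] Djun_eq[OF v] by simp
  moreover have "fv (AJ u) (BJ u) v = fjun u + (- deriv gj (AJ u)) * (fst v - fst u) + deriv gi (BJ u) * (snd v - snd u)"
    unfolding fjun_def fv_def by (simp add: algebra_simps)
  ultimately show "real_of_ereal (Djun v) \<ge> real_of_ereal (Djun u) + (- deriv gj (AJ u)) * (fst v - fst u) + deriv gi (BJ u) * (snd v - snd u)"
    using Djun_eq[OF u] Djun_eq[OF v] by simp
qed

definition flin where "flin z = - deriv gj xm * fst z + deriv gi xp * snd z + c"

lemma C1_lin: "C1_HJ (Ham (\<lambda>_. gj) 0) (Ham (\<lambda>_. gi) 0) flin"
proof (rule cert[of "\<lambda>_. xm" "\<lambda>_. xp"])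
  show "continuous_on Quad (\<lambda>_. xm)" "continuous_on Quad (\<lambda>_. xp)" by (intro continuous_intros)+
  show "Kt gj xm = Kt gi xp" for z using xm xp by simp
  show "flin z = fv xm xp z" for z unfolding flin_def fv_def using xm by simp
  show "flin v \<ge> flin u + (- deriv gj xm) * (fst v - fst u) + deriv gi xp * (snd v - snd u)" for u v
    unfolding flin_def by (simp add: algebra_simps)
qed

end


theorem mainTheorem18:
  fixes N :: nat and L :: "nat \<Rightarrow> real \<Rightarrow> real" and \<gamma> :: real and i j :: nat
  assumes "N \<ge> 1"
    and "\<gamma> > 0"
    and C2: "\<forall>l\<in>{1..N}. (\<forall>x. L l differentiable at x) \<and> (\<forall>x. deriv (L l) differentiable at x)
              \<and> continuous_on UNIV (deriv (deriv (L l)))"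
    and convex: "\<forall>l\<in>{1..N}. \<forall>x. deriv (deriv (L l)) x \<ge> \<gamma>"
    and "i \<in> {1..N}" and "j \<in> {1..N}"
  shows "(\<forall>z\<in>Quad. \<bar>D_junction N L j i z\<bar> \<noteq> \<infinity> \<and> \<bar>D_implicit N L j i z\<bar> \<noteq> \<infinity>)
       \<and> C1_HJ (Ham L j) (Ham L i) (\<lambda>z. real_of_ereal (D_junction N L j i z))
       \<and> C1_HJ (Ham L j) (Ham L i) (D_linear N L j i)
       \<and> C1_HJ (Ham L j) (Ham L i) (\<lambda>z. real_of_ereal (D_implicit N L j i z))"
proof -
  have lf: "Lfun (L l) \<gamma>" if "l \<in> {1..N}" for l
    using C2 convex that assms(2) by (intro Lfun.intro) auto
  have cle: "L00 N L \<le> L l 0" if "l \<in> {1..N}" for l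
    unfolding L00_def using that by (intro Min_le) auto
  interpret T: Two "L j" "L i" \<gamma> "L00 N L"
    by (intro Two.intro Two_axioms.intro lf cle assms(5,6))
  have E1e: "E1 N L j = T.e1" by (simp add: fun_eq_iff E1_def T.e1_def)
  have E2e: "E2 N L i = T.e2" by (simp add: fun_eq_iff E2_def T.e2_def)
  have Dj: "D_junction N L j i = T.Djun" by (simp add: fun_eq_iff D_junction_def T.Djun_def E1e E2e)
  have Di: "D_implicit N L j i = T.Dimp" by (simp add: fun_eq_iff D_implicit_def T.Dimp_def E1e E2e)
  have Kf: "Kfun N L l = (\<lambda>\<xi>. Kt (L l) \<xi> - L00 N L)" for l by (simp add: fun_eq_iff Kfun_def Kt_def)
  have Dl: "D_linear N L j i = T.flin"
    by (simp add: fun_eq_iff D_linear_def T.flin_def xi_minus_def xi_plus_def T.xm_def T.xp_def Kf)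
  have Hj: "Ham L j = Ham (\<lambda>_. L j) 0" and Hi: "Ham L i = Ham (\<lambda>_. L i) 0"
    by (simp_all add: fun_eq_iff Ham_def)
  show ?thesis
    unfolding Dj Di Dl Hj Hi
    using T.C1_jun T.C1_lin T.C1_imp T.Djun_eq T.Dimp_eq by simp
qed


end
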